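(* Consider the ODE system $$\frac{du}{dt}=\frac{a_1u}{1+fv}-b_1u^2-c_1uv,\qquad \frac{dv}{dt}=a_2v-b_2v^2-c_2uv,$$ with positive parameters $a_1,a_2,b_1,b_2,c_1,c_2$ and $f\ge0$. The boundary equilibrium $E_3=(0,\frac{a_2}{b_2})$ is locally stable (both eigenvalues of the Jacobian at $E_3$ are negative) if and only if $$f>\frac{a_1b_2^2-a_2b_2c_1}{a_2^2c_1}.$$ *)

theory Defs
  imports "HOL-Analysis.Analysis"
begin

definition rhs_u :: "real \<Rightarrow> real \<Rightarrow> real \<Rightarrow> real \<Rightarrow> real \<Rightarrow> real \<Rightarrow> real" where
  "rhs_u a1 b1 c1 f u v = a1 * u / (1 + f * v) - b1 * u^2 - c1 * u * v"

definition rhs_v :: "real \<Rightarrow> real \<Rightarrow> real \<Rightarrow> real \<Rightarrow> real \<Rightarrow> real" where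
  "rhs_v a2 b2 c2 u v = a2 * v - b2 * v^2 - c2 * u * v"

definition jacobian2 :: "(real \<Rightarrow> real \<Rightarrow> real) \<Rightarrow> (real \<Rightarrow> real \<Rightarrow> real) \<Rightarrow> real \<Rightarrow> real \<Rightarrow> real^2^2" where
  "jacobian2 P Q u0 v0 =
     vector [vector [deriv (\<lambda>u. P u v0) u0, deriv (\<lambda>v. P u0 v) v0],
             vector [deriv (\<lambda>u. Q u v0) u0, deriv (\<lambda>v. Q u0 v) v0]]"

definition is_eigenvalue2 :: "real^2^2 \<Rightarrow> complex \<Rightarrow> bool" where
  "is_eigenvalue2 A l \<longleftrightarrow>
     det ((\<chi> i j. (if i = j then l else 0) - complex_of_real (A $ i $ j)) :: complex^2^2) = 0"

end

theory Submission
  imports Defs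
begin

theorem mainTheorem8:
  fixes a1 a2 b1 b2 c1 c2 f :: real
  assumes "a1 > 0" "a2 > 0" "b1 > 0" "b2 > 0" "c1 > 0" "c2 > 0" "f \<ge> 0"
  shows "(\<forall>l. is_eigenvalue2 (jacobian2 (rhs_u a1 b1 c1 f) (rhs_v a2 b2 c2) 0 (a2 / b2)) l
              \<longrightarrow> Im l = 0 \<and> Re l < 0)
         \<longleftrightarrow> f > (a1 * b2^2 - a2 * b2 * c1) / (a2^2 * c1)"
proof -
  define v0 where "v0 = a2 / b2"
  define A where "A = a1 / (1 + f * v0) - c1 * v0"
  have v0pos: "v0 > 0" using assms by (simp add: v0_def)
  have den: "1 + f * v0 > 0" using assms v0pos by (smt (verit) mult_nonneg_nonneg)
  have d1: "deriv (\<lambda>u. rhs_u a1 b1 c1 f u v0) 0 = A"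
  proof (rule DERIV_imp_deriv)
    show "((\<lambda>u. rhs_u a1 b1 c1 f u v0) has_real_derivative A) (at 0)"
      unfolding rhs_u_def A_def
      by (auto intro!: derivative_eq_intros simp: den[THEN less_imp_neq, symmetric])
  qed
  have d2: "deriv (\<lambda>v. rhs_u a1 b1 c1 f 0 v) v0 = 0"
    unfolding rhs_u_def by simp
  have d3: "deriv (\<lambda>u. rhs_v a2 b2 c2 u v0) 0 = - c2 * v0"
  proof (rule DERIV_imp_deriv)
    show "((\<lambda>u. rhs_v a2 b2 c2 u v0) has_real_derivative - c2 * v0) (at 0)"
      unfolding rhs_v_def by (auto intro!: derivative_eq_intros)
  qed
  have d4: "deriv (\<lambda>v. rhs_v a2 b2 c2 0 v) v0 = - a2"
  proof (rule DERIV_imp_deriv)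
    show "((\<lambda>v. rhs_v a2 b2 c2 0 v) has_real_derivative - a2) (at v0)"
      unfolding rhs_v_def using assms
      by (auto intro!: derivative_eq_intros simp: v0_def field_simps)
  qed
  have eig: "is_eigenvalue2 (jacobian2 (rhs_u a1 b1 c1 f) (rhs_v a2 b2 c2) 0 (a2 / b2)) l
      \<longleftrightarrow> l = complex_of_real A \<or> l = - complex_of_real a2" for l
  proof -
    have "is_eigenvalue2 (jacobian2 (rhs_u a1 b1 c1 f) (rhs_v a2 b2 c2) 0 (a2 / b2)) l
       \<longleftrightarrow> (l - complex_of_real A) * (l + complex_of_real a2) = 0"
      unfolding is_eigenvalue2_def jacobian2_def v0_def[symmetric]
      by (simp add: det_2 d1 d2 d3 d4 algebra_simps)
    thus ?thesis by (simp add: eq_neg_iff_add_eq_0)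
  qed
  have "(\<forall>l. is_eigenvalue2 (jacobian2 (rhs_u a1 b1 c1 f) (rhs_v a2 b2 c2) 0 (a2 / b2)) l
              \<longrightarrow> Im l = 0 \<and> Re l < 0) \<longleftrightarrow> A < 0"
    unfolding eig using assms by auto
  also have "\<dots> \<longleftrightarrow> a1 / (1 + f * v0) < c1 * v0" by (simp add: A_def)
  also have "\<dots> \<longleftrightarrow> a1 < c1 * v0 * (1 + f * v0)" using den by (simp add: divide_less_eq)
  also have "\<dots> \<longleftrightarrow> a1 * b2^2 < c1 * a2 * (b2 + f * a2)"
    using assms by (simp add: v0_def field_simps power2_eq_square)
  also have "\<dots> \<longleftrightarrow> f > (a1 * b2^2 - a2 * b2 * c1) / (a2^2 * c1)"
    using assms by (simp add: divide_less_eq field_simps power2_eq_square)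
  finally show ?thesis .
qed

end
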